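(* Let $\ell\ge1$ be an integer and let $A$ be the operator on $L^2(0,1)$ given by $Aw=w^{(2\ell+1)}$ with domain $D(A)=\{w\in H^{2\ell+1}(0,1): w^{(k)}(0)=w^{(k)}(1)\text{ for } k=0,\dots,2\ell\}$, which is skew-adjoint and generates a unitary $C_0$-group $(e^{tA})_{t\in\mathbb{R}}$. Then there exists $0\le f_1\in L^2(0,1)$ such that there is no $t_0\ge0$ with $e^{tA}f_1\ge0$ for all $t\ge t_0$; likewise there exists $0\le f_2\in L^2(0,1)$ such that there is no $t_0\ge 0$ with $e^{-tA}f_2\ge 0$ for all $t\ge t_0$.
   Context: $f\ge 0$ means $f$ is nonnegative almost everywhere. *)

theory Defs
  imports "HOL-Analysis.Analysis"
begin

text \<open>Real L^2(0,1), represented by functions real => real; only values on (0,1)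
  matter (modulo null sets).\<close>

definition L2 :: "(real \<Rightarrow> real) \<Rightarrow> bool" where
  "L2 f \<longleftrightarrow> f \<in> borel_measurable lborel \<and>
     set_integrable lborel {0<..<1} (\<lambda>x. (f x)^2)"

definition aeq :: "(real \<Rightarrow> real) \<Rightarrow> (real \<Rightarrow> real) \<Rightarrow> bool" where
  "aeq f g \<longleftrightarrow> (AE x in lborel. x \<in> {0<..<1} \<longrightarrow> f x = g x)"

definition L2norm :: "(real \<Rightarrow> real) \<Rightarrow> real" where
  "L2norm f = sqrt (LINT x:{0<..<1}|lborel. (f x)^2)"

definition nonneg :: "(real \<Rightarrow> real) \<Rightarrow> bool" where
  "nonneg f \<longleftrightarrow> (AE x in lborel. x \<in> {0<..<1} \<longrightarrow> 0 \<le> f x)"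

definition C0_group :: "(real \<Rightarrow> (real \<Rightarrow> real) \<Rightarrow> (real \<Rightarrow> real)) \<Rightarrow> bool" where
  "C0_group T \<longleftrightarrow>
    (\<forall>t f. L2 f \<longrightarrow> L2 (T t f)) \<and>
    (\<forall>t f g. L2 f \<longrightarrow> L2 g \<longrightarrow> aeq f g \<longrightarrow> aeq (T t f) (T t g)) \<and>
    (\<forall>t f g a b. L2 f \<longrightarrow> L2 g \<longrightarrow>
        aeq (T t (\<lambda>x. a * f x + b * g x)) (\<lambda>x. a * T t f x + b * T t g x)) \<and>
    (\<forall>t. \<exists>M. \<forall>f. L2 f \<longrightarrow> L2norm (T t f) \<le> M * L2norm f) \<and>
    (\<forall>f. L2 f \<longrightarrow> aeq (T 0 f) f) \<and>
    (\<forall>s t f. L2 f \<longrightarrow> aeq (T (s + t) f) (T s (T t f))) \<and>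
    (\<forall>f. L2 f \<longrightarrow> ((\<lambda>t. L2norm (\<lambda>x. T t f x - f x)) \<longlongrightarrow> 0) (at 0))"

text \<open>D 0 is (the continuous representative of) a function in H^m(0,1), m >= 1, and
  D k is its k-th derivative: D 0, ..., D (m-1) are classically differentiable on [0,1]
  (one-sided at the endpoints), D (m-1) is absolutely continuous with a.e. derivative
  D m, and D m is in L^2(0,1).\<close>

definition sobolev_derivs :: "nat \<Rightarrow> (nat \<Rightarrow> real \<Rightarrow> real) \<Rightarrow> bool" where
  "sobolev_derivs m D \<longleftrightarrow> 1 \<le> m \<and>
     (\<forall>k < m - 1. \<forall>x\<in>{0..1}. (D k has_real_derivative D (Suc k) x) (at x within {0..1})) \<and>
     L2 (D m) \<and>
     (\<forall>x\<in>{0..1}. D (m - 1) x = D (m - 1) 0 + (LBINT s=0..x. D m s))"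

definition A_graph :: "nat \<Rightarrow> (real \<Rightarrow> real) \<Rightarrow> (real \<Rightarrow> real) \<Rightarrow> bool" where
  "A_graph l f g \<longleftrightarrow> (\<exists>D. sobolev_derivs (2 * l + 1) D \<and>
      (\<forall>k \<le> 2 * l. D k 0 = D k 1) \<and> aeq (D 0) f \<and> aeq (D (2 * l + 1)) g)"

definition generated_by_A :: "nat \<Rightarrow> (real \<Rightarrow> (real \<Rightarrow> real) \<Rightarrow> (real \<Rightarrow> real)) \<Rightarrow> bool" where
  "generated_by_A l T \<longleftrightarrow> C0_group T \<and>
     (\<forall>f g. L2 f \<longrightarrow> L2 g \<longrightarrow>
        (((\<lambda>h. L2norm (\<lambda>x. (T h f x - f x) / h - g x)) \<longlongrightarrow> 0) (at_right 0)
          \<longleftrightarrow> A_graph l f g))"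

end

theory Submission
  imports Defs
begin


lemma L2_lin:
  assumes f: "L2 f" and g: "L2 g"
  shows "L2 (\<lambda>x. a * f x + b * g x)"
proof -
  have fm: "f \<in> borel_measurable lborel" and gm: "g \<in> borel_measurable lborel"
    using f g by (auto simp: L2_def)
  have fi: "set_integrable lborel {0<..<1} (\<lambda>x. (f x)^2)"
   and gi: "set_integrable lborel {0<..<1} (\<lambda>x. (g x)^2)"
    using f g by (auto simp: L2_def)
  have bi: "set_integrable lborel {0<..<1} (\<lambda>x. 2*a^2*(f x)^2 + 2*b^2*(g x)^2)"
    using fi gi by (intro set_integral_add) auto
  have "set_integrable lborel {0<..<1} (\<lambda>x. (a * f x + b * g x)^2)"
  proof (rule set_integrable_bound[OF bi])
    show "set_borel_measurable lborel {0<..<1} (\<lambda>x. (a * f x + b * g x)\<^sup>2)"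
      unfolding set_borel_measurable_def using fm gm by measurable
    show "AE x in lborel. x \<in> {0<..<1} \<longrightarrow> norm ((a * f x + b * g x)\<^sup>2) \<le> norm (2 * a\<^sup>2 * (f x)\<^sup>2 + 2 * b\<^sup>2 * (g x)\<^sup>2)"
    proof (intro AE_I2 impI)
      fix x
      have "0 \<le> (a * f x - b * g x)^2" by simp
      then have "(a * f x + b * g x)\<^sup>2 \<le> 2 * a\<^sup>2 * (f x)\<^sup>2 + 2 * b\<^sup>2 * (g x)\<^sup>2"
        by (simp add: power2_eq_square algebra_simps)
      then show "norm ((a * f x + b * g x)\<^sup>2) \<le> norm (2 * a\<^sup>2 * (f x)\<^sup>2 + 2 * b\<^sup>2 * (g x)\<^sup>2)"
        by simp
    qed
  qed
  then show ?thesis unfolding L2_def using fm gm by auto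
qed

lemma L2_cont:
  assumes "continuous_on UNIV f"
  shows "L2 f"
proof -
  have m: "f \<in> borel_measurable lborel"
    using borel_measurable_continuous_onI[OF assms] by simp
  have "continuous_on {0..1} (\<lambda>x. (f x)^2)"
    by (intro continuous_intros continuous_on_subset[OF assms]) auto
  then have "integrable lborel (\<lambda>x. indicator {0..1::real} x *\<^sub>R (f x)^2)"
    by (intro borel_integrable_compact) auto
  then have "set_integrable lborel {0..1} (\<lambda>x. (f x)^2)"
    by (simp add: set_integrable_def)
  then have "set_integrable lborel {0<..<1} (\<lambda>x. (f x)^2)"
    by (rule set_integrable_subset) auto
  then show ?thesis using m by (simp add: L2_def)
qed



lemma L2_integrable:
  assumes f: "L2 f"
  shows "set_integrable lborel {0<..<1} f"
proof -
  have fm: "f \<in> borel_measurable lborel" and fi: "set_integrable lborel {0<..<1} (\<lambda>x. (f x)^2)"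
    using f by (auto simp: L2_def)
  have ci: "set_integrable lborel {0<..<1::real} (\<lambda>x. 1::real)"
    using L2_cont[of "\<lambda>x. 1"] by (simp add: L2_def)
  have bi: "set_integrable lborel {0<..<1} (\<lambda>x. 1 + (f x)^2)"
    using fi ci by (intro set_integral_add) auto
  show ?thesis
  proof (rule set_integrable_bound[OF bi])
    show "set_borel_measurable lborel {0<..<1} f"
      unfolding set_borel_measurable_def using fm by measurable
    show "AE x in lborel. x \<in> {0<..<1} \<longrightarrow> norm (f x) \<le> norm (1 + (f x)^2)"
    proof (intro AE_I2 impI)
      fix x
      have "0 \<le> (\<bar>f x\<bar> - 1)^2" by simp
      then have "\<bar>f x\<bar> \<le> 1 + (f x)^2"
        by (simp add: power2_eq_square algebra_simps abs_mult_self_eq)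
      then show "norm (f x) \<le> norm (1 + (f x)^2)" by simp
    qed
  qed
qed

lemma si_mult:
  fixes f :: "'a \<Rightarrow> real"
  shows "set_integrable M A f \<Longrightarrow> set_integrable M A (\<lambda>t. c * f t)"
  by (rule set_integrable_mult_right)

definition Pint :: "real \<Rightarrow> real \<Rightarrow> (real \<Rightarrow> real) \<Rightarrow> real" where
  "Pint a b f = (LINT x:{a..b}|lborel. f x)"

lemma Pint_integrable:
  assumes "L2 f" "0 < a" "b < 1"
  shows "set_integrable lborel {a..b} f"
  using L2_integrable[OF assms(1)] by (rule set_integrable_subset) (use assms in auto)

lemma Pint_lin:
  assumes "L2 f" "L2 g" "0 < a" "b < 1"
  shows "Pint a b (\<lambda>x. c * f x + d * g x) = c * Pint a b f + d * Pint a b g"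
proof -
  have i1: "set_integrable lborel {a..b} (\<lambda>x. c * f x)" and i2: "set_integrable lborel {a..b} (\<lambda>x. d * g x)"
    using Pint_integrable[OF assms(1,3,4)] Pint_integrable[OF assms(2,3,4)] by auto
  show ?thesis unfolding Pint_def
    using set_integral_add(2)[OF i1 i2] by simp
qed

lemma Pint_aeq:
  assumes "L2 f" "L2 g" "aeq f g" "0 < a" "b < 1"
  shows "Pint a b f = Pint a b g"
  unfolding Pint_def
proof (rule set_lebesgue_integral_cong_AE)
  show "f \<in> borel_measurable lborel" "g \<in> borel_measurable lborel"
    using assms by (auto simp: L2_def)
  show "{a..b} \<in> sets lborel" by simp
  show "AE x\<in>{a..b} in lborel. f x = g x"
    using assms(3) unfolding aeq_def by eventually_elim (use assms in auto)
qed

lemma Pint_nonneg: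
  assumes "L2 f" "nonneg f" "0 < a" "b < 1"
  shows "0 \<le> Pint a b f"
  unfolding Pint_def set_lebesgue_integral_def
proof (rule integral_nonneg_AE)
  show "AE x in lborel. 0 \<le> indicat_real {a..b} x *\<^sub>R f x"
    using assms(2) unfolding nonneg_def by eventually_elim (use assms in \<open>auto simp: indicator_def\<close>)
qed

lemma L1_le_L2norm:
  assumes f: "L2 f"
  shows "(LINT x:{0<..<1}|lborel. \<bar>f x\<bar>) \<le> L2norm f"
proof -
  have fm: "f \<in> borel_measurable lborel" and fi: "set_integrable lborel {0<..<1} (\<lambda>x. (f x)^2)"
    using f by (auto simp: L2_def)
  define Q where "Q = (LINT x:{0<..<1}|lborel. (f x)^2)"
  have Q0: "0 \<le> Q" unfolding Q_def set_lebesgue_integral_def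
    by (rule integral_nonneg_AE) auto
  have ai: "set_integrable lborel {0<..<1} (\<lambda>x. \<bar>f x\<bar>)"
    using set_integrable_abs[OF L2_integrable[OF f]] .
  have ci: "set_integrable lborel {0<..<1::real} (\<lambda>x. 1::real)"
    using L2_cont[of "\<lambda>x. 1"] by (simp add: L2_def)
  have meas: "measure lborel {0<..<1::real} = 1" by simp
  have key: "(LINT x:{0<..<1}|lborel. \<bar>f x\<bar>) \<le> e/2 + Q/(2*e)" if e: "e > 0" for e
  proof -
    have bi: "set_integrable lborel {0<..<1} (\<lambda>x. e/2 * 1 + 1/(2*e) * (f x)^2)"
      by (intro set_integral_add(1) set_integrable_mult_right ci fi)
    have "(LINT x:{0<..<1}|lborel. \<bar>f x\<bar>) \<le> (LINT x:{0<..<1}|lborel. e/2 * 1 + 1/(2*e) * (f x)^2)"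
    proof (rule set_integral_mono[OF ai bi])
      fix x
      have "0 \<le> (\<bar>f x\<bar> - e)^2" by simp
      then have "2 * e * \<bar>f x\<bar> \<le> e * e + (f x)^2"
        by (simp add: power2_eq_square algebra_simps abs_mult_self_eq)
      then show "\<bar>f x\<bar> \<le> e/2 * 1 + 1/(2*e) * (f x)^2"
        using e by (simp add: field_simps)
    qed
    also have "\<dots> = (LINT (x::real):{0<..<1}|lborel. e/2 * 1) + (LINT x:{0<..<1}|lborel. 1/(2*e) * (f x)^2)"
      by (rule set_integral_add(2)[OF si_mult[OF ci, of "e/2"] si_mult[OF fi, of "1/(2*e)"]])
    also have "(LINT (x::real):{0<..<1}|lborel. e/2 * 1) = e/2"
      by (subst set_integral_const) auto
    also have "(LINT x:{0<..<1}|lborel. 1/(2*e) * (f x)^2) = 1/(2*e) * Q"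
      unfolding Q_def by (rule set_integral_mult_right)
    finally show ?thesis by simp
  qed
  show ?thesis
  proof (cases "Q = 0")
    case True
    have "(LINT x:{0<..<1}|lborel. \<bar>f x\<bar>) \<le> 0 + e" if "e > 0" for e
      using key[of "2*e"] that True by simp
    then have "(LINT x:{0<..<1}|lborel. \<bar>f x\<bar>) \<le> 0" by (rule field_le_epsilon)
    then show ?thesis unfolding L2norm_def by (simp add: True[unfolded Q_def])
  next
    case False
    then have sQ: "sqrt Q > 0" using Q0 by simp
    have "(LINT x:{0<..<1}|lborel. \<bar>f x\<bar>) \<le> sqrt Q / 2 + Q / (2 * sqrt Q)"
      using key[OF sQ] .
    also have "Q / (2 * sqrt Q) = sqrt Q / 2"
    proof -
      have e: "sqrt Q * sqrt Q = Q" using Q0 by simp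
      have "sqrt Q * sqrt Q / (2 * sqrt Q) = sqrt Q / 2" using sQ by (simp add: field_simps)
      then show ?thesis by (simp only: e)
    qed
    finally show ?thesis unfolding L2norm_def Q_def[symmetric] by simp
  qed
qed

lemma Pint_bound:
  assumes f: "L2 f" and "0 < a" "b < 1"
  shows "\<bar>Pint a b f\<bar> \<le> L2norm f"
proof -
  have i: "set_integrable lborel {a..b} f" using Pint_integrable assms by blast
  have "\<bar>Pint a b f\<bar> \<le> (LINT x:{a..b}|lborel. \<bar>f x\<bar>)"
    unfolding Pint_def using set_integral_norm_bound[OF i] by simp
  also have "\<dots> \<le> (LINT x:{0<..<1}|lborel. \<bar>f x\<bar>)"
    unfolding set_lebesgue_integral_def
  proof (rule integral_mono)
    show "integrable lborel (\<lambda>x. indicat_real {a..b} x *\<^sub>R \<bar>f x\<bar>)"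
      using set_integrable_abs[OF i] by (simp add: set_integrable_def)
    show "integrable lborel (\<lambda>x. indicat_real {0<..<1} x *\<^sub>R \<bar>f x\<bar>)"
      using set_integrable_abs[OF L2_integrable[OF f]] by (simp add: set_integrable_def)
    show "indicat_real {a..b} x *\<^sub>R \<bar>f x\<bar> \<le> indicat_real {0<..<1} x *\<^sub>R \<bar>f x\<bar>" for x
      using assms by (auto simp: indicator_def)
  qed
  also have "\<dots> \<le> L2norm f" by (rule L1_le_L2norm[OF f])
  finally show ?thesis .
qed



lemma L2_scal: "L2 f \<Longrightarrow> L2 (\<lambda>x. c * f x)"
  using L2_lin[of f f c 0] by simp

lemma C0_L2: "C0_group T \<Longrightarrow> L2 f \<Longrightarrow> L2 (T t f)"
  by (simp add: C0_group_def)

lemma C0_lin: "C0_group T \<Longrightarrow> L2 f \<Longrightarrow> L2 g \<Longrightarrow>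
    aeq (T t (\<lambda>x. c * f x + d * g x)) (\<lambda>x. c * T t f x + d * T t g x)"
  by (simp add: C0_group_def)

lemma C0_grp: "C0_group T \<Longrightarrow> L2 f \<Longrightarrow> aeq (T (s + t) f) (T s (T t f))"
  by (simp add: C0_group_def)

lemma C0_zero: "C0_group T \<Longrightarrow> L2 f \<Longrightarrow> aeq (T 0 f) f"
  by (simp add: C0_group_def)

lemma C0_bnd: "C0_group T \<Longrightarrow> \<exists>M. \<forall>f. L2 f \<longrightarrow> L2norm (T t f) \<le> M * L2norm f"
  by (simp add: C0_group_def)

lemma C0_cont: "C0_group T \<Longrightarrow> L2 f \<Longrightarrow> ((\<lambda>t. L2norm (\<lambda>x. T t f x - f x)) \<longlongrightarrow> 0) (at 0)"
  by (simp add: C0_group_def)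

lemma PT_lin:
  assumes T: "C0_group T" and f: "L2 f" and g: "L2 g" and ab: "0 < a" "b < 1"
  shows "Pint a b (T t (\<lambda>x. c * f x + d * g x)) = c * Pint a b (T t f) + d * Pint a b (T t g)"
proof -
  have "Pint a b (T t (\<lambda>x. c * f x + d * g x)) = Pint a b (\<lambda>x. c * T t f x + d * T t g x)"
    by (rule Pint_aeq[OF C0_L2[OF T L2_lin[OF f g]] L2_lin[OF C0_L2[OF T f] C0_L2[OF T g]] C0_lin[OF T f g] ab])
  also have "\<dots> = c * Pint a b (T t f) + d * Pint a b (T t g)"
    by (rule Pint_lin[OF C0_L2[OF T f] C0_L2[OF T g] ab])
  finally show ?thesis .
qed

lemma PT_scal:
  assumes T: "C0_group T" and f: "L2 f" and ab: "0 < a" "b < 1"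
  shows "Pint a b (T t (\<lambda>x. c * f x)) = c * Pint a b (T t f)"
  using PT_lin[OF T f f ab, of t c 0] by simp

lemma PT_grp:
  assumes T: "C0_group T" and f: "L2 f" and ab: "0 < a" "b < 1"
  shows "Pint a b (T (s + t) f) = Pint a b (T s (T t f))"
  by (rule Pint_aeq[OF C0_L2[OF T f] C0_L2[OF T C0_L2[OF T f]] C0_grp[OF T f] ab])

lemma PT_zero:
  assumes T: "C0_group T" and f: "L2 f" and ab: "0 < a" "b < 1"
  shows "Pint a b (T 0 f) = Pint a b f"
  by (rule Pint_aeq[OF C0_L2[OF T f] f C0_zero[OF T f] ab])

lemma PT_cont:
  assumes T: "C0_group T" and f: "L2 f" and ab: "0 < a" "b < 1"
  shows "isCont (\<lambda>s. Pint a b (T s f)) t"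
proof -
  define y where "y = T t f"
  have y: "L2 y" unfolding y_def by (rule C0_L2[OF T f])
  have eq: "Pint a b (T (t + h) f) - Pint a b (T t f) = Pint a b (\<lambda>z. 1 * T h y z + (-1) * y z)" for h
  proof -
    have "Pint a b (T (t + h) f) = Pint a b (T h y)"
      using PT_grp[OF T f ab, of h t] by (simp add: y_def add.commute)
    then show ?thesis using Pint_lin[OF C0_L2[OF T y] y ab, of 1 h "-1"] by (simp add: y_def)
  qed
  have "((\<lambda>h. Pint a b (\<lambda>z. 1 * T h y z + (-1) * y z)) \<longlongrightarrow> 0) (at 0)"
  proof (rule Lim_null_comparison)
    show "\<forall>\<^sub>F h in at 0. norm (Pint a b (\<lambda>z. 1 * T h y z + - 1 * y z)) \<le> L2norm (\<lambda>x. T h y x - y x)"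
    proof (intro always_eventually allI)
      fix h
      have "L2 (\<lambda>z. T h y z - y z)" using L2_lin[OF C0_L2[OF T y, of h] y, where a=1 and b="-1"] by simp
      from Pint_bound[OF this ab] show "norm (Pint a b (\<lambda>z. 1 * T h y z + - 1 * y z)) \<le> L2norm (\<lambda>x. T h y x - y x)"
        by simp
    qed
    show "((\<lambda>h. L2norm (\<lambda>x. T h y x - y x)) \<longlongrightarrow> 0) (at 0)" by (rule C0_cont[OF T y])
  qed
  then have "((\<lambda>h. Pint a b (T (t + h) f) - Pint a b (T t f)) \<longlongrightarrow> 0) (at 0)"
    by (simp only: eq)
  then have "((\<lambda>h. Pint a b (T (t + h) f)) \<longlongrightarrow> Pint a b (T t f)) (at 0)"
    by (simp add: LIM_zero_iff)
  then show ?thesis by (simp add: isCont_iff)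
qed

definition rgen :: "(real \<Rightarrow> (real \<Rightarrow> real) \<Rightarrow> (real \<Rightarrow> real)) \<Rightarrow> (real \<Rightarrow> real) \<Rightarrow> (real \<Rightarrow> real) \<Rightarrow> bool" where
  "rgen T f g \<longleftrightarrow> ((\<lambda>h. L2norm (\<lambda>x. (T h f x - f x) / h - g x)) \<longlongrightarrow> 0) (at_right 0)"

lemma PT_rderiv:
  assumes T: "C0_group T" and f: "L2 f" and g: "L2 g" and ab: "0 < a" "b < 1" and G: "rgen T f g"
  shows "((\<lambda>s. Pint a b (T s f)) has_real_derivative Pint a b (T t g)) (at t within {t<..})"
proof -
  define p where "p = (\<lambda>s. Pint a b (T s f))"
  obtain M where M: "\<And>h. L2 h \<Longrightarrow> L2norm (T t h) \<le> M * L2norm h"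
    using C0_bnd[OF T, of t] by blast
  define D where "D = (\<lambda>h z. 1 * T h f z + (-1) * f z)"
  define F where "F = (\<lambda>h z. (1/h) * D h z + (-1) * g z)"
  have D: "L2 (D h)" for h unfolding D_def by (intro L2_lin C0_L2[OF T] f)
  have F: "L2 (F h)" for h unfolding F_def by (intro L2_lin D g)
  have Feq: "F h = (\<lambda>z. (T h f z - f z) / h - g z)" for h
    unfolding F_def D_def by (auto simp: field_simps)
  have eq: "(p (t + h) - p t) / h - Pint a b (T t g) = Pint a b (T t (F h))" for h
  proof -
    have "Pint a b (T t (F h)) = (1/h) * Pint a b (T t (D h)) + (-1) * Pint a b (T t g)"
      unfolding F_def by (rule PT_lin[OF T D g ab])
    also have "Pint a b (T t (D h)) = 1 * Pint a b (T t (T h f)) + (-1) * Pint a b (T t f)"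
      unfolding D_def by (rule PT_lin[OF T C0_L2[OF T f] f ab])
    also have "Pint a b (T t (T h f)) = p (t + h)"
      unfolding p_def by (rule PT_grp[OF T f ab, symmetric])
    finally show ?thesis unfolding p_def by (simp add: field_simps)
  qed
  have lim0: "((\<lambda>h. Pint a b (T t (F h))) \<longlongrightarrow> 0) (at_right 0)"
  proof (rule Lim_null_comparison)
    show "\<forall>\<^sub>F h in at_right 0. norm (Pint a b (T t (F h))) \<le> M * L2norm (F h)"
      by (intro always_eventually allI order.trans[OF _ M[OF F]]) (simp add: Pint_bound[OF C0_L2[OF T F] ab])
    have "((\<lambda>h. L2norm (F h)) \<longlongrightarrow> 0) (at_right 0)"
      using G unfolding rgen_def Feq .
    then show "((\<lambda>h. M * L2norm (F h)) \<longlongrightarrow> 0) (at_right 0)"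
      using tendsto_mult_left[of _ 0 _ M] by simp
  qed
  have "((\<lambda>h. (p (t + h) - p t) / h - Pint a b (T t g)) \<longlongrightarrow> 0) (at_right 0)"
    using lim0 by (simp only: eq)
  then have "((\<lambda>h. (p (t + h) - p t) / h) \<longlongrightarrow> Pint a b (T t g)) (at_right 0)"
    by (simp add: LIM_zero_iff)
  then have "((\<lambda>h. (p (h + t) - p t) / (h + t - t)) \<longlongrightarrow> Pint a b (T t g)) (at_right 0)"
    by (simp add: add.commute)
  then have "((\<lambda>y. (p y - p t) / (y - t)) \<longlongrightarrow> Pint a b (T t g)) (at_right t)"
    by (subst at_right_to_0) (simp add: filterlim_filtermap)
  then show ?thesis unfolding p_def[symmetric]
    by (subst has_field_derivative_iff)
qed



lemma rderiv_le:
  fixes g :: "real \<Rightarrow> real"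
  assumes c: "\<And>x. isCont g x" and d: "\<And>x. (g has_real_derivative 0) (at x within {x<..})"
    and ab: "a \<le> b" and e: "e > 0"
  shows "g b - g a \<le> e * (b - a)"
proof -
  define S where "S = {x\<in>{a..b}. g x - g a - e * (x - a) \<le> 0}"
  have aS: "a \<in> S" using ab by (simp add: S_def)
  have bdd: "bdd_above S" unfolding S_def by (rule bdd_aboveI[of _ b]) auto
  have cl: "closed S"
  proof -
    have "continuous_on UNIV (\<lambda>x. g x - g a - e * (x - a))"
    proof -
      have "continuous_on UNIV g" using c by (simp add: continuous_at_imp_continuous_on)
      then show ?thesis by (intro continuous_on_diff continuous_on_mult continuous_on_const continuous_on_id)
    qed
    then have "closed {x. g x - g a - e * (x - a) \<le> 0}"
      by (rule closed_Collect_le[OF _ continuous_on_const])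
    then have "closed ({a..b} \<inter> {x. g x - g a - e * (x - a) \<le> 0})" by (intro closed_Int) auto
    moreover have "S = {a..b} \<inter> {x. g x - g a - e * (x - a) \<le> 0}" unfolding S_def by auto
    ultimately show ?thesis by simp
  qed
  define s where "s = Sup S"
  have sS: "s \<in> S" unfolding s_def by (rule closed_contains_Sup[OF _ bdd cl]) (use aS in blast)
  have "s = b"
  proof (rule ccontr)
    assume "s \<noteq> b"
    with sS have sb: "s < b" by (simp add: S_def)
    have "((\<lambda>y. (g y - g s) / (y - s)) \<longlongrightarrow> 0) (at s within {s<..})"
      using d[of s] by (simp add: has_field_derivative_iff)
    then have "\<forall>\<^sub>F y in at_right s. (g y - g s) / (y - s) < e"
      by (rule order_tendstoD(2)[OF _ e])
    then obtain b' where b': "b' > s" "\<And>y. s < y \<Longrightarrow> y < b' \<Longrightarrow> (g y - g s) / (y - s) < e"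
      unfolding eventually_at_right_field by blast
    define y where "y = (s + min b b') / 2"
    have y1: "s < y" "y < b'" "y \<le> b" using b'(1) sb by (auto simp: y_def)
    have "(g y - g s) / (y - s) < e" using b'(2) y1 by auto
    then have "g y - g s \<le> e * (y - s)" using y1 by (simp add: divide_less_eq)
    moreover have "g s - g a - e * (s - a) \<le> 0" using sS by (simp add: S_def)
    moreover have "a \<le> y" using sS y1 by (simp add: S_def)
    ultimately have "y \<in> S" using y1 by (simp add: S_def algebra_simps)
    then have "y \<le> s" unfolding s_def using bdd by (rule cSup_upper)
    then show False using y1 by simp
  qed
  then show ?thesis using sS by (simp add: S_def)
qed

lemma rderiv_const:
  fixes g :: "real \<Rightarrow> real"
  assumes c: "\<And>x. isCont g x" and d: "\<And>x. (g has_real_derivative 0) (at x within {x<..})"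
  shows "g b = g a"
proof -
  have *: "g v = g u" if uv: "u \<le> v" for u v
  proof -
    have c': "isCont (\<lambda>x. - g x) x" for x using c by (intro continuous_intros)
    have d': "((\<lambda>x. - g x) has_real_derivative 0) (at x within {x<..})" for x
      using DERIV_minus[OF d[of x]] by simp
    have "\<bar>g v - g u\<bar> \<le> 0 + e" if e: "e > 0" for e
    proof -
      have e': "e / (v - u + 1) > 0" using e uv by simp
      have 1: "g v - g u \<le> e / (v - u + 1) * (v - u)" by (rule rderiv_le[OF c d uv e'])
      have 2: "- g v - - g u \<le> e / (v - u + 1) * (v - u)" by (rule rderiv_le[OF c' d' uv e'])
      have "e / (v - u + 1) * (v - u) \<le> e"
        using e uv by (simp add: field_simps)
      then show ?thesis using 1 2 by linarith
    qed
    then have "\<bar>g v - g u\<bar> \<le> 0" by (rule field_le_epsilon)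
    then show ?thesis by simp
  qed
  show ?thesis by (cases "a \<le> b") (use *[of a b] *[of b a] in auto)
qed



definition wv :: "real \<Rightarrow> real \<Rightarrow> real \<Rightarrow> real" where
  "wv k ph = (\<lambda>x. cos (k * x + ph))"

lemma wv_L2: "L2 (wv k ph)"
  unfolding wv_def by (rule L2_cont) (intro continuous_intros)

lemma cos_shift_nat: "cos (2 * pi * real n + c) = cos c"
proof -
  have "cos (2 * pi * real n + c) = cos (2 * real n * pi) * cos c - sin (2 * real n * pi) * sin c"
    by (simp add: cos_add mult.commute mult.left_commute)
  also have "sin (2 * real n * pi) = 0" using sin_npi[of "2*n"] by (simp add: mult.assoc)
  finally show ?thesis by simp
qed

lemma cos_ph: "cos (u + pi/2) = - sin u"
  by (simp add: cos_add)

lemma wv_A_graph: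
  assumes k: "k = 2 * pi * real n"
  shows "A_graph l (wv k ph) (\<lambda>x. k ^ (2*l+1) * cos (k * x + ph + real (2*l+1) * pi / 2))"
proof -
  define D where "D = (\<lambda>j x. k ^ j * cos (k * x + ph + real j * pi / 2))"
  have der: "(D j has_real_derivative D (Suc j) x) (at x)" for j x
  proof -
    have e: "cos (k * x + ph + real (Suc j) * pi / 2) = - sin (k * x + ph + real j * pi / 2)"
    proof -
      have "cos (k * x + ph + real (Suc j) * pi / 2) = cos ((k * x + ph + real j * pi / 2) + pi / 2)"
        by (rule arg_cong[where f=cos]) (simp add: algebra_simps add_divide_distrib)
      also have "\<dots> = - sin (k * x + ph + real j * pi / 2)" by (rule cos_ph)
      finally show ?thesis .
    qed
    show ?thesis unfolding D_def
      by (rule derivative_eq_intros refl)+ (simp only: e, simp)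
  qed
  have cont: "continuous_on UNIV (D j)" for j
    unfolding D_def by (intro continuous_intros)
  have sd: "sobolev_derivs (2*l+1) D"
    unfolding sobolev_derivs_def
  proof (intro conjI ballI allI impI)
    show "1 \<le> 2 * l + 1" by simp
    show "(D j has_real_derivative D (Suc j) x) (at x within {0..1})" for j x
      by (rule has_field_derivative_at_within[OF der])
    show "L2 (D (2 * l + 1))" by (rule L2_cont[OF cont])
    fix x :: real assume x: "x \<in> {0..1}"
    have "(LBINT s=ereal 0..ereal x. D (2*l+1) s) = D (2*l) x - D (2*l) 0"
    proof (rule interval_integral_FTC_finite)
      show "continuous_on {min 0 x..max 0 x} (D (2 * l + 1))"
        using cont continuous_on_subset by blast
      show "(D (2*l) has_vector_derivative D (2 * l + 1) y) (at y within {min 0 x..max 0 x})" for y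
        using has_field_derivative_at_within[OF der[of "2*l" y]]
        by (simp add: has_real_derivative_iff_has_vector_derivative)
    qed
    then show "D (2 * l + 1 - 1) x = D (2 * l + 1 - 1) 0 + (LBINT s=0..x. D (2 * l + 1) s)"
      by (simp add: zero_ereal_def)
  qed
  have per: "D j 0 = D j 1" for j
    unfolding D_def k using cos_shift_nat[of n "ph + real j * pi / 2"] by (simp add: add.assoc)
  show ?thesis unfolding A_graph_def
  proof (intro exI[of _ D] conjI allI impI sd)
    show "D j 0 = D j 1" for j by (rule per)
    show "aeq (D 0) (wv k ph)" unfolding aeq_def D_def wv_def by simp
    show "aeq (D (2 * l + 1)) (\<lambda>x. k ^ (2 * l + 1) * cos (k * x + ph + real (2 * l + 1) * pi / 2))"
      unfolding aeq_def D_def by simp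
  qed
qed

lemma Dm_eq: "(\<lambda>x. k ^ (2*l+1) * cos (k * x + ph + real (2*l+1) * pi / 2))
   = (\<lambda>x. ((-1)^l * k ^ (2*l+1)) * wv k (ph + pi/2) x)"
proof
  fix x
  have "cos (k * x + ph + real (2*l+1) * pi / 2) = cos ((k * x + ph + pi/2) + real l * pi)"
    by (simp add: algebra_simps add_divide_distrib)
  also have "\<dots> = (-1)^l * cos (k * x + ph + pi/2)"
    by (simp add: cos_add)
  finally show "k ^ (2*l+1) * cos (k * x + ph + real (2*l+1) * pi / 2) = ((-1)^l * k ^ (2*l+1)) * wv k (ph + pi/2) x"
    by (simp add: wv_def add.assoc)
qed

lemma gen_rgen:
  assumes G: "generated_by_A l T" and k: "k = 2 * pi * real n"
  shows "rgen T (wv k ph) (\<lambda>x. ((-1)^l * k ^ (2*l+1)) * wv k (ph + pi/2) x)"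
proof -
  have L: "L2 (\<lambda>x. k ^ (2*l+1) * cos (k * x + ph + real (2*l+1) * pi / 2))"
    by (rule L2_cont) (intro continuous_intros)
  have "rgen T (wv k ph) (\<lambda>x. k ^ (2*l+1) * cos (k * x + ph + real (2*l+1) * pi / 2))"
    using G wv_A_graph[OF k, of l ph] L wv_L2[of k ph] unfolding generated_by_A_def rgen_def by blast
  then show ?thesis by (simp only: Dm_eq)
qed



lemma wv_pi: "wv k (ph + pi/2 + pi/2) = (\<lambda>x. (-1) * wv k ph x)"
proof
  fix x
  have "cos (k * x + (ph + pi / 2 + pi / 2)) = cos ((k * x + ph) + pi)" by (simp add: algebra_simps)
  also have "\<dots> = - cos (k * x + ph)" by simp
  finally show "wv k (ph + pi/2 + pi/2) x = (-1) * wv k ph x" by (simp add: wv_def)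
qed

lemma wv_shift: "wv k (ph + c) = (\<lambda>x. cos c * wv k ph x + sin c * wv k (ph + pi/2) x)"
proof
  fix x
  have "cos (k * x + (ph + c)) = cos ((k * x + ph) + c)" by (simp add: algebra_simps)
  also have "\<dots> = cos c * cos (k * x + ph) + sin c * cos ((k * x + ph) + pi/2)"
    by (simp add: cos_add cos_ph)
  finally show "wv k (ph + c) x = cos c * wv k ph x + sin c * wv k (ph + pi/2) x"
    by (simp add: wv_def add.assoc)
qed

lemma dcos: "((\<lambda>s. cos (lam * s)) has_real_derivative - (lam * sin (lam * t))) (at t within X)"
  by (rule derivative_eq_intros refl)+ simp

lemma dsin: "((\<lambda>s. sin (lam * s)) has_real_derivative lam * cos (lam * t)) (at t within X)"
  by (rule derivative_eq_intros refl)+ simp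

lemma mode:
  assumes T: "C0_group T" and R: "\<And>ph. rgen T (wv k ph) (\<lambda>x. lam * wv k (ph + pi/2) x)"
    and ab: "0 < a" "b < 1"
  shows "Pint a b (T t (wv k ph)) = Pint a b (wv k (ph + lam * t))"
proof -
  define p where "p = (\<lambda>ps s. Pint a b (T s (wv k ps)))"
  have dp: "(p ps has_real_derivative lam * p (ps + pi/2) s) (at s within {s<..})" for ps s
  proof -
    have "(p ps has_real_derivative Pint a b (T s (\<lambda>x. lam * wv k (ps + pi/2) x))) (at s within {s<..})"
      unfolding p_def by (rule PT_rderiv[OF T wv_L2 L2_scal[OF wv_L2] ab R])
    then show ?thesis using PT_scal[OF T wv_L2 ab] by (simp add: p_def)
  qed
  have neg: "p (ps + pi/2 + pi/2) s = - p ps s" for ps s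
    unfolding p_def wv_pi using PT_scal[OF T wv_L2 ab, of s "-1"] by simp
  have cont: "isCont (p ps) s" for ps s
    unfolding p_def by (rule PT_cont[OF T wv_L2 ab])
  define u where "u = (\<lambda>s. cos (lam * s) * p ph s - sin (lam * s) * p (ph + pi/2) s)"
  define v where "v = (\<lambda>s. sin (lam * s) * p ph s + cos (lam * s) * p (ph + pi/2) s)"
  have uc: "isCont u s" for s unfolding u_def using cont by (intro continuous_intros) auto
  have vc: "isCont v s" for s unfolding v_def using cont by (intro continuous_intros) auto
  have ud: "(u has_real_derivative 0) (at s within {s<..})" for s
  proof -
    have "(u has_real_derivative
        ((- (lam * sin (lam * s))) * p ph s + lam * p (ph + pi/2) s * cos (lam * s))
      - ((lam * cos (lam * s)) * p (ph + pi/2) s + lam * p (ph + pi/2 + pi/2) s * sin (lam * s)))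
      (at s within {s<..})"
      unfolding u_def by (intro DERIV_diff DERIV_mult dcos dsin dp)
    then show ?thesis by (rule DERIV_cong) (simp only: neg, simp add: algebra_simps)
  qed
  have vd: "(v has_real_derivative 0) (at s within {s<..})" for s
  proof -
    have "(v has_real_derivative
        ((lam * cos (lam * s)) * p ph s + lam * p (ph + pi/2) s * sin (lam * s))
      + ((- (lam * sin (lam * s))) * p (ph + pi/2) s + lam * p (ph + pi/2 + pi/2) s * cos (lam * s)))
      (at s within {s<..})"
      unfolding v_def by (intro DERIV_add DERIV_mult dcos dsin dp)
    then show ?thesis by (rule DERIV_cong) (simp only: neg, simp add: algebra_simps)
  qed
  have u0: "u t = Pint a b (wv k ph)"
    using rderiv_const[OF uc ud, of t 0] by (simp add: u_def p_def PT_zero[OF T wv_L2 ab])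
  have v0: "v t = Pint a b (wv k (ph + pi/2))"
    using rderiv_const[OF vc vd, of t 0] by (simp add: v_def p_def PT_zero[OF T wv_L2 ab])
  have "p ph t = cos (lam * t) * u t + sin (lam * t) * v t"
  proof -
    have "cos (lam * t) * u t + sin (lam * t) * v t = p ph t * (cos (lam * t) * cos (lam * t) + sin (lam * t) * sin (lam * t))"
      by (simp add: u_def v_def algebra_simps del: sin_cos_squared_add3)
    then show ?thesis by (simp only: sin_cos_squared_add3 mult_1_right)
  qed
  also have "\<dots> = Pint a b (\<lambda>x. cos (lam * t) * wv k ph x + sin (lam * t) * wv k (ph + pi/2) x)"
    unfolding u0 v0 by (rule Pint_lin[OF wv_L2 wv_L2 ab, symmetric])
  also have "\<dots> = Pint a b (wv k (ph + lam * t))"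
    by (simp only: wv_shift[of k ph "lam * t", symmetric])
  finally show ?thesis by (simp add: p_def)
qed



lemma neg_interval:
  fixes g :: "real \<Rightarrow> real"
  assumes c: "continuous_on UNIV g" and x: "0 < x" "x < 1" and gx: "g x < 0"
  shows "\<exists>a b. 0 < a \<and> b < 1 \<and> Pint a b g < 0"
proof -
  have "isCont g x" using c by (simp add: continuous_on_eq_continuous_at)
  then obtain d where d: "d > 0" "\<And>y. dist y x < d \<Longrightarrow> dist (g y) (g x) < - g x / 2"
    using gx unfolding continuous_at_eps_delta by (metis divide_pos_pos neg_0_less_iff_less zero_less_numeral)
  define r where "r = min d (min x (1 - x)) / 2"
  have r: "r > 0" "r < d" "r < x" "r < 1 - x" using d x by (auto simp: r_def)
  define a where "a = x - r"
  define b where "b = x + r"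
  have ab: "0 < a" "b < 1" "a < b" using r by (auto simp: a_def b_def)
  have L: "L2 g" by (rule L2_cont[OF c])
  have Lc: "L2 (\<lambda>y. g x / 2)" by (rule L2_cont) (intro continuous_intros)
  have "Pint a b g \<le> Pint a b (\<lambda>y. g x / 2)"
    unfolding Pint_def
  proof (rule set_integral_mono[OF Pint_integrable[OF L ab(1,2)] Pint_integrable[OF Lc ab(1,2)]])
    fix y assume "y \<in> {a..b}"
    then have "dist y x < d" using r by (auto simp: a_def b_def dist_real_def)
    then have "dist (g y) (g x) < - g x / 2" by (rule d(2))
    then show "g y \<le> g x / 2" by (auto simp: dist_real_def)
  qed
  also have "Pint a b (\<lambda>y. g x / 2) = (b - a) * (g x / 2)"
    unfolding Pint_def using ab by (subst set_integral_const) auto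
  also have "\<dots> < 0" using ab gx by (simp add: mult_pos_neg)
  finally show ?thesis using ab by blast
qed

lemma cos_int_per: "cos (y + 2 * pi * of_int i) = cos y"
proof -
  have "sin (2 * pi * of_int i) = 0"
    using sin_int_2pin[of i] by (simp only: mult.assoc)
  moreover have "cos (2 * pi * of_int i) = 1"
    using cos_int_2pin[of i] by (simp only: mult.assoc)
  ultimately show ?thesis by (simp add: cos_add)
qed

lemma choose_time_ge:
  fixes c d r :: real
  assumes "c \<noteq> 0" "0 < d" "d < 2 * pi"
  shows "\<exists>i::int. r \<le> (2 * pi * of_int i + d) / c"
proof (cases "c > 0")
  case True
  define i where "i = \<lceil>r * c / (2 * pi)\<rceil>"
  have "r * c / (2 * pi) \<le> of_int i" unfolding i_def by simp
  then have "r * c \<le> 2 * pi * of_int i" by (simp add: field_simps)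
  then have "r * c \<le> 2 * pi * of_int i + d" using assms by simp
  then show ?thesis using True by (intro exI[of _ i]) (simp add: field_simps)
next
  case False
  then have c: "c < 0" using assms by simp
  define i where "i = \<lfloor>r * c / (2 * pi)\<rfloor> - 1"
  have "of_int i \<le> r * c / (2 * pi) - 1" unfolding i_def by simp
  then have "2 * pi * of_int i \<le> r * c - 2 * pi" by (simp add: field_simps)
  then have "2 * pi * of_int i + d \<le> r * c" using assms by simp
  then show ?thesis using c by (intro exI[of _ i]) (simp add: field_simps)
qed

lemma choose_time_le:
  fixes c d r :: real
  assumes "c \<noteq> 0" "0 < d" "d < 2 * pi"
  shows "\<exists>i::int. (2 * pi * of_int i + d) / c \<le> r"
proof -
  obtain i :: int where "- r \<le> (2 * pi * of_int i + d) / (- c)"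
    using choose_time_ge[of "-c" d "-r"] assms by auto
  then show ?thesis by (intro exI[of _ i]) simp
qed



theorem proposition6p10:
  fixes l :: nat and T :: "real \<Rightarrow> (real \<Rightarrow> real) \<Rightarrow> (real \<Rightarrow> real)"
  assumes "1 \<le> l" and "generated_by_A l T"
  shows "(\<exists>f1. L2 f1 \<and> nonneg f1 \<and> \<not> (\<exists>t0\<ge>0. \<forall>t\<ge>t0. nonneg (T t f1))) \<and>
         (\<exists>f2. L2 f2 \<and> nonneg f2 \<and> \<not> (\<exists>t0\<ge>0. \<forall>t\<ge>t0. nonneg (T (- t) f2)))"
proof -
  have T: "C0_group T" using assms(2) by (simp add: generated_by_A_def)
  define lam where "lam = (\<lambda>n::nat. (-1)^l * (2 * pi * real n) ^ (2*l+1))"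
  define w where "w = (\<lambda>n::nat. wv (2 * pi * real n))"
  have wL: "L2 (w n ph)" for n ph unfolding w_def by (rule wv_L2)
  have M: "Pint a b (T t (w n 0)) = Pint a b (w n (lam n * t))" if ab: "0 < a" "b < 1" for a b t n
  proof -
    have R: "rgen T (wv (2 * pi * real n) ph) (\<lambda>x. lam n * wv (2 * pi * real n) (ph + pi/2) x)" for ph
      unfolding lam_def by (rule gen_rgen[OF assms(2) refl])
    show ?thesis unfolding w_def using mode[OF T R ab, of t 0] by simp
  qed
  define F1 where "F1 = (\<lambda>x. 3/2 * w 0 0 x + 2 * w 1 0 x)"
  define f where "f = (\<lambda>x. 1 * F1 x + 1/2 * w 2 0 x)"
  define G where "G = (\<lambda>t x. 1 * (3/2 * w 0 (lam 0 * t) x + 2 * w 1 (lam 1 * t) x) + 1/2 * w 2 (lam 2 * t) x)"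
  have F1L: "L2 F1" unfolding F1_def by (intro L2_lin wL)
  have fL: "L2 f" unfolding f_def by (intro L2_lin wL F1L)
  have fnn: "nonneg f"
  proof -
    have "f x = (1 + cos (2 * pi * x))^2" for x
    proof -
      have "cos (4 * pi * x) = 2 * (cos (2 * pi * x))^2 - 1"
        using cos_double_cos[of "2 * pi * x"] by (simp add: mult.assoc)
      then show ?thesis unfolding f_def F1_def w_def wv_def
        by (simp add: power2_eq_square algebra_simps)
    qed
    then show ?thesis unfolding nonneg_def by simp
  qed
  have key: "Pint a b (T t f) = Pint a b (G t)" if ab: "0 < a" "b < 1" for a b t
  proof -
    have "Pint a b (T t f) = 1 * Pint a b (T t F1) + 1/2 * Pint a b (T t (w 2 0))"
      unfolding f_def by (rule PT_lin[OF T F1L wL ab])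
    also have "Pint a b (T t F1) = 3/2 * Pint a b (T t (w 0 0)) + 2 * Pint a b (T t (w 1 0))"
      unfolding F1_def by (rule PT_lin[OF T wL wL ab])
    moreover have "Pint a b (G t) = 1 * Pint a b (\<lambda>x. 3/2 * w 0 (lam 0 * t) x + 2 * w 1 (lam 1 * t) x)
        + 1/2 * Pint a b (w 2 (lam 2 * t))"
      unfolding G_def by (rule Pint_lin[OF L2_lin[OF wL wL] wL ab])
    moreover have "Pint a b (\<lambda>x. 3/2 * w 0 (lam 0 * t) x + 2 * w 1 (lam 1 * t) x)
        = 3/2 * Pint a b (w 0 (lam 0 * t)) + 2 * Pint a b (w 1 (lam 1 * t))"
      by (rule Pint_lin[OF wL wL ab])
    ultimately show ?thesis using M[OF ab] by simp
  qed
  have Gc: "continuous_on UNIV (G t)" for t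
    unfolding G_def w_def wv_def by (intro continuous_intros)
  have notnn: "\<not> nonneg (T t f)" if x: "0 < x" "x < 1" and gx: "G t x < 0" for t x
  proof
    assume nn: "nonneg (T t f)"
    obtain a b where ab: "0 < a" "b < 1" and neg: "Pint a b (G t) < 0"
      using neg_interval[OF Gc x gx] by blast
    have "0 \<le> Pint a b (T t f)" by (rule Pint_nonneg[OF C0_L2[OF T fL] nn ab])
    then show False using neg key[OF ab] by simp
  qed
  define q :: real where "q = 2 ^ (2*l+1) - 2"
  have q: "q \<ge> 6"
  proof -
    have "(2::real) ^ 3 \<le> 2 ^ (2*l+1)" using assms(1) by (intro power_increasing) auto
    then show ?thesis unfolding q_def by simp
  qed
  define xs where "xs = 1/2 - 1/(2*q)"
  have xs: "0 < xs" "xs < 1" using q by (auto simp: xs_def field_simps)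
  have lam1: "lam 1 \<noteq> 0" unfolding lam_def by simp
  have lam0: "lam 0 = 0" unfolding lam_def by simp
  have lam2: "lam 2 = 2 ^ (2*l+1) * lam 1"
  proof -
    have h4: "(4::real)^n = 2^n * 2^n" for n by (simp add: power_mult_distrib[symmetric])
    show ?thesis unfolding lam_def by (simp add: power_mult_distrib h4)
  qed
  have Gneg: "G ((2 * pi * of_int i + pi / q) / lam 1) xs = -1" for i :: int
  proof -
    define s where "s = (2 * pi * of_int i + pi / q) / lam 1"
    have s1: "lam 1 * s = 2 * pi * of_int i + pi / q" unfolding s_def using lam1 by simp
    have s2: "lam 2 * s = 2 ^ (2*l+1) * (2 * pi * of_int i + pi / q)" unfolding lam2 using s1 by simp
    have c1: "cos (2 * pi * 1 * xs + lam 1 * s) = -1"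
    proof -
      have "2 * pi * 1 * xs + lam 1 * s = pi + 2 * pi * of_int i"
        unfolding s1 xs_def using q by (simp add: field_simps)
      then show ?thesis by (simp only: cos_int_per cos_pi)
    qed
    have c2: "cos (2 * pi * 2 * xs + lam 2 * s) = -1"
    proof -
      have qq: "2 ^ (2*l+1) = q + 2" unfolding q_def by simp
      have "2 * pi * 2 * xs + lam 2 * s = pi + 2 * pi * (1 + (q + 2) * of_int i)"
        unfolding s2 qq xs_def using q by (simp add: field_simps)
      also have "(1 + (q + 2) * of_int i) = real_of_int (1 + 2 ^ (2*l+1) * i)"
        unfolding qq[symmetric] by simp
      finally have "2 * pi * 2 * xs + lam 2 * s = pi + 2 * pi * real_of_int (1 + 2 ^ (2*l+1) * i)" .
      then show ?thesis by (simp only: cos_int_per cos_pi)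
    qed
    show ?thesis unfolding s_def[symmetric] G_def w_def wv_def lam0 using c1 c2 by simp
  qed
  have pq: "0 < pi / q" "pi / q < 2 * pi" using q pi_gt_zero by (auto simp: field_simps)
  show ?thesis
  proof (intro conjI exI[of _ f])
    show "L2 f" "nonneg f" "L2 f" "nonneg f" by (fact fL fnn)+
    show "\<not> (\<exists>t0\<ge>0. \<forall>t\<ge>t0. nonneg (T t f))"
    proof
      assume "\<exists>t0\<ge>0. \<forall>t\<ge>t0. nonneg (T t f)"
      then obtain t0 where t0: "\<forall>t\<ge>t0. nonneg (T t f)" by blast
      obtain i :: int where i: "t0 \<le> (2 * pi * of_int i + pi / q) / lam 1"
        using choose_time_ge[OF lam1 pq] by blast
      show False using t0 i notnn[OF xs, of "(2 * pi * of_int i + pi / q) / lam 1"] Gneg[of i] by simp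
    qed
    show "\<not> (\<exists>t0\<ge>0. \<forall>t\<ge>t0. nonneg (T (- t) f))"
    proof
      assume "\<exists>t0\<ge>0. \<forall>t\<ge>t0. nonneg (T (- t) f)"
      then obtain t0 where t0: "\<forall>t\<ge>t0. nonneg (T (- t) f)" by blast
      obtain i :: int where i: "(2 * pi * of_int i + pi / q) / lam 1 \<le> - t0"
        using choose_time_le[OF lam1 pq] by blast
      have "nonneg (T (- (- ((2 * pi * of_int i + pi / q) / lam 1))) f)"
        using t0[rule_format, of "- ((2 * pi * of_int i + pi / q) / lam 1)"] i by linarith
      then show False using notnn[OF xs, of "(2 * pi * of_int i + pi / q) / lam 1"] Gneg[of i] by simp
    qed
  qed
qed


end
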